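(* Let $s>1$ and let $M$ be the $s\times s$ integer matrix with $M_{i,i}=M_{i,i+1}=1$ and all other entries $0$. Let $n\in\mathbb N$. For every $y\in\mathbb R^s$ with $y_s=0$ there is a unique $x\in\mathbb R^s$ with $x_1=0$ and $(M^n-\mathrm{Id})x=y$. If moreover for some $k\in\{3,\dots,s\}$ one has $y_i=0$ for all $i\ge s-k+2$, then $x_j=0$ for all $j\ge s-k+3$. Finally, there is a constant $C>0$ depending only on $s$ (not on $n$) such that whenever $\kappa>0$ and $|y_i|\le\kappa/n^{i-1}$ for $1\le i\le s-1$, the solution satisfies $|x_j|\le C\kappa/n^{j-1}$ for $2\le j\le s$.
   Context: Note $M^n_{i,i}=1$ and $M^n_{i,j}=\binom{n}{j-i}$ for $i<j$, $M^n_{i,j}=0$ for $i>j$. *)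

theory Defs
  imports "Jordan_Normal_Form.Matrix"
begin

text \<open>The s x s matrix M with M(i,i) = M(i,i+1) = 1 and all other entries 0
  (0-based indices; entries viewed in the reals).\<close>
definition M_mat :: "nat \<Rightarrow> real mat" where
  "M_mat s = mat s s (\<lambda>(i, j). if j = i \<or> j = i + 1 then 1 else 0)"

end

theory Submission
  imports Defs
begin


lemma M_carrier[simp]: "M_mat s \<in> carrier_mat s s"
  by (simp add: M_mat_def)

lemma M_index: "i < s \<Longrightarrow> j < s \<Longrightarrow> M_mat s $$ (i,j) = (if j = i \<or> j = i + 1 then 1 else 0)"
  by (simp add: M_mat_def)

lemma Mpow_index:
  "i < s \<Longrightarrow> j < s \<Longrightarrow> (M_mat s ^\<^sub>m n) $$ (i,j) = (if i \<le> j then real (n choose (j - i)) else 0)"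
proof (induction n arbitrary: j)
  case 0
  then show ?case by (simp add: M_mat_def)
next
  case (Suc n)
  have "(M_mat s ^\<^sub>m Suc n) $$ (i,j) = (\<Sum>k<s. (M_mat s ^\<^sub>m n) $$ (i,k) * M_mat s $$ (k,j))"
  proof -
    have d: "dim_row (M_mat s ^\<^sub>m n) = s" "dim_col (M_mat s ^\<^sub>m n) = s"
      "dim_row (M_mat s) = s" "dim_col (M_mat s) = s" by (auto simp: M_mat_def)
    show ?thesis using Suc.prems d
      by (simp add: scalar_prod_def atLeast0LessThan)
  qed
  also have "\<dots> = (\<Sum>k<s. (if k = j then (M_mat s ^\<^sub>m n) $$ (i,k) else 0)
       + (if Suc k = j then (M_mat s ^\<^sub>m n) $$ (i,k) else 0))"
    using Suc.prems by (intro sum.cong) (auto simp: M_index)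
  also have "\<dots> = (M_mat s ^\<^sub>m n) $$ (i,j) + (if j \<ge> 1 then (M_mat s ^\<^sub>m n) $$ (i,j-1) else 0)"
  proof -
    have "(\<Sum>k<s. (if Suc k = j then (M_mat s ^\<^sub>m n) $$ (i,k) else 0)) =
          (\<Sum>k<s. (if k = j - 1 \<and> j \<ge> 1 then (M_mat s ^\<^sub>m n) $$ (i,k) else 0))"
      by (intro sum.cong) auto
    also have "\<dots> = (if j \<ge> 1 then (M_mat s ^\<^sub>m n) $$ (i,j-1) else 0)"
      using Suc.prems by (cases "j \<ge> 1") (auto simp: sum.delta)
    finally show ?thesis using Suc.prems by (simp add: sum.distrib sum.delta)
  qed
  also have "\<dots> = (if i \<le> j then real (Suc n choose (j - i)) else 0)"
  proof (cases "i \<le> j")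
    case True
    show ?thesis
    proof (cases "i = j")
      case True then show ?thesis using Suc by (simp, linarith)
    next
      case False
      then have "j - i = Suc (j - 1 - i)" "i \<le> j - 1" "j \<ge> 1" using \<open>i \<le> j\<close> by auto
      then show ?thesis using Suc by (simp del: One_nat_def add: binomial_Suc_Suc)
    qed
  next
    case False then show ?thesis using Suc by (simp, linarith)
  qed
  finally show ?case .
qed

definition R :: "nat \<Rightarrow> nat \<Rightarrow> (nat \<Rightarrow> real) \<Rightarrow> nat \<Rightarrow> real" where
  "R n s x i = (\<Sum>j\<in>{i<..<s}. real (n choose (j - i)) * x j)"

lemma row_eq:
  assumes "x \<in> carrier_vec s" "i < s"
  shows "((M_mat s ^\<^sub>m n - 1\<^sub>m s) *\<^sub>v x) $ i = R n s (\<lambda>j. x $ j) i"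
proof -
  have "((M_mat s ^\<^sub>m n - 1\<^sub>m s) *\<^sub>v x) $ i =
     (\<Sum>j\<in>{0..<s}. ((if i \<le> j then real (n choose (j - i)) else 0) - (if i = j then 1 else 0)) * x $ j)"
    using assms by (simp add: scalar_prod_def Mpow_index)
  also have "\<dots> = (\<Sum>j\<in>{i<..<s}. real (n choose (j - i)) * x $ j)"
    by (rule sum.mono_neutral_cong_right) auto
  finally show ?thesis by (simp add: R_def)
qed



lemma choose_le_pow': "n choose r \<le> n ^ r"
  by (cases "r \<le> n") (auto simp: binomial_le_pow binomial_eq_0)

lemma R_split:
  assumes "1 \<le> j" "j < s"
  shows "R n s x (j-1) = real n * x j + (\<Sum>l\<in>{j<..<s}. real (n choose (l - (j-1))) * x l)"
proof -
  have "{j-1<..<s} = insert j {j<..<s}" using assms by auto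
  then show ?thesis using assms by (simp add: R_def)
qed

lemma R_cong: "(\<And>j. i < j \<Longrightarrow> j < s \<Longrightarrow> x j = x' j) \<Longrightarrow> R n s x i = R n s x' i"
  unfolding R_def by (intro sum.cong) auto

lemma R_diff: "R n s (\<lambda>j. x j - x' j) i = R n s x i - R n s x' i"
  unfolding R_def by (simp add: right_diff_distrib sum_subtractf)

lemma zero_tail:
  assumes n: "n \<ge> 1" and z: "\<And>i. r \<le> i \<Longrightarrow> i < s \<Longrightarrow> R n s x i = 0"
  shows "r < j \<Longrightarrow> j < s \<Longrightarrow> x j = 0"
proof (induction "s - j" arbitrary: j rule: less_induct)
  case less
  have "(\<Sum>l\<in>{j<..<s}. real (n choose (l - (j-1))) * x l) = 0"
    using less by (intro sum.neutral) auto
  then have "R n s x (j-1) = real n * x j" using R_split[of j s n x] less.prems by simp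
  moreover have "R n s x (j-1) = 0" using z less.prems by auto
  ultimately show ?case using n by simp
qed

lemma existence:
  assumes n: "n \<ge> 1"
  shows "1 \<le> t \<Longrightarrow> t \<le> s \<Longrightarrow> \<exists>x. (\<forall>j<t. x j = 0) \<and> (\<forall>i. t - 1 \<le> i \<and> i < s - 1 \<longrightarrow> R n s x i = y i)"
proof (induction "s - t" arbitrary: t)
  case 0
  then show ?case by (intro exI[of _ "\<lambda>_. 0"]) auto
next
  case (Suc m)
  then obtain x where x0: "\<forall>j<t+1. x j = 0" and xr: "\<forall>i. t \<le> i \<and> i < s - 1 \<longrightarrow> R n s x i = y i"
  proof -
    have "m = s - Suc t" "Suc t \<le> s" using Suc.hyps(2) Suc.prems by auto
    then show ?thesis using Suc(1)[of "t+1"] that by auto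
  qed
  define x' where "x' = x(t := (y (t-1) - (\<Sum>l\<in>{t<..<s}. real (n choose (l - (t-1))) * x l)) / n)"
  have "R n s x' (t-1) = y (t-1)"
  proof -
    have "R n s x' (t-1) = real n * x' t + (\<Sum>l\<in>{t<..<s}. real (n choose (l - (t-1))) * x' l)"
      using R_split[of t s n x'] Suc by simp
    also have "(\<Sum>l\<in>{t<..<s}. real (n choose (l - (t-1))) * x' l) = (\<Sum>l\<in>{t<..<s}. real (n choose (l - (t-1))) * x l)"
      by (intro sum.cong) (auto simp: x'_def)
    also have "x' t = (y (t-1) - (\<Sum>l\<in>{t<..<s}. real (n choose (l - (t-1))) * x l)) / n"
      by (simp add: x'_def)
    finally show ?thesis using n by simp
  qed
  moreover have "\<forall>i. t \<le> i \<and> i < s - 1 \<longrightarrow> R n s x' i = y i"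
  proof (intro allI impI)
    fix i assume "t \<le> i \<and> i < s - 1"
    then have "R n s x' i = R n s x i" by (intro R_cong) (auto simp: x'_def)
    then show "R n s x' i = y i" using xr \<open>t \<le> i \<and> i < s - 1\<close> by simp
  qed
  ultimately have "\<forall>i. t - 1 \<le> i \<and> i < s - 1 \<longrightarrow> R n s x' i = y i"
  proof (intro allI impI)
    fix i assume a: "t - 1 \<le> i \<and> i < s - 1"
    assume h1: "R n s x' (t-1) = y (t-1)" and h2: "\<forall>i. t \<le> i \<and> i < s - 1 \<longrightarrow> R n s x' i = y i"
    show "R n s x' i = y i"
    proof (cases "i = t - 1")
      case True then show ?thesis using h1 by simp
    next
      case False then show ?thesis using h2 a by auto
    qed
  qed
  moreover have "\<forall>j<t. x' j = 0" using x0 by (auto simp: x'_def)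
  ultimately show ?case by blast
qed

lemma geo: "j < s \<Longrightarrow> 1 + (\<Sum>l\<in>{j<..<s}. (2::real) ^ (s - 1 - l)) = 2 ^ (s - 1 - j)"
proof (induction s)
  case 0 then show ?case by simp
next
  case (Suc s)
  show ?case
  proof (cases "j = s")
    case True then show ?thesis by simp
  next
    case False
    then have js: "j < s" using Suc by simp
    have "{j<..<Suc s} = insert s {j<..<s}" using js by auto
    then have "(\<Sum>l\<in>{j<..<Suc s}. (2::real) ^ (Suc s - 1 - l)) = 1 + (\<Sum>l\<in>{j<..<s}. 2 ^ (Suc s - 1 - l))"
      by simp
    also have "(\<Sum>l\<in>{j<..<s}. (2::real) ^ (Suc s - 1 - l)) = (\<Sum>l\<in>{j<..<s}. 2 * 2 ^ (s - 1 - l))"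
      by (intro sum.cong) (auto simp: Suc_diff_le simp flip: power_Suc)
    also have "\<dots> = 2 * (\<Sum>l\<in>{j<..<s}. 2 ^ (s - 1 - l))"
      by (simp add: sum_distrib_left)
    finally have e: "(\<Sum>l\<in>{j<..<Suc s}. (2::real) ^ (Suc s - 1 - l)) = 1 + 2 * (\<Sum>l\<in>{j<..<s}. 2 ^ (s - 1 - l))" .
    have "Suc s - 1 - j = Suc (s - 1 - j)" using js by simp
    then show ?thesis using Suc.IH[OF js] e by simp

  qed
qed



lemma tm_lemma:
  fixes x :: "nat \<Rightarrow> real"
  assumes npos: "real n > 0" and l: "j < l" and j: "1 \<le> j"
    and IH: "\<bar>x l\<bar> \<le> 2^(s-1-l) * \<kappa> / real n ^ l"
  shows "\<bar>real (n choose (l - (j-1))) * x l\<bar> \<le> 2^(s-1-l) * \<kappa> / real n ^ (j-1)"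
proof -
  have c0: "real (n choose (l - (j-1))) \<le> real (n ^ (l - (j-1)))"
    by (simp only: of_nat_le_iff choose_le_pow')
  have c: "real (n choose (l - (j-1))) \<le> real n ^ (l - (j-1))"
    using c0 by simp
  have pw: "real n ^ l = real n ^ (l - (j-1)) * real n ^ (j-1)"
    using l j by (simp flip: power_add)
  have "\<bar>real (n choose (l - (j-1))) * x l\<bar> = real (n choose (l - (j-1))) * \<bar>x l\<bar>" by (simp add: abs_mult)
  also have "\<dots> \<le> real n ^ (l - (j-1)) * (2^(s-1-l) * \<kappa> / real n ^ l)"
    by (rule mult_mono[OF c IH]) simp_all
  also have "\<dots> = 2^(s-1-l) * \<kappa> / real n ^ (j-1)"
    using npos unfolding pw by (simp add: field_simps)
  finally show ?thesis .
qed

lemma fin_lemma: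
  fixes xj yj S G K \<kappa> :: real
  assumes npos: "real n > 0" and j: "1 \<le> j"
    and rel: "real n * xj = yj - S" and yj: "\<bar>yj\<bar> \<le> K" and Sb: "\<bar>S\<bar> \<le> G * K"
    and G: "1 + G = 2^(s-1-j)" and K: "K = \<kappa> / real n ^ (j-1)"
  shows "\<bar>xj\<bar> \<le> 2^(s-1-j) * \<kappa> / real n ^ j"
proof -
  have A: "real n * \<bar>xj\<bar> \<le> \<bar>yj\<bar> + \<bar>S\<bar>"
  proof -
    have "real n * \<bar>xj\<bar> = \<bar>real n * xj\<bar>" by (simp add: abs_mult)
    also have "\<dots> = \<bar>yj - S\<bar>" using rel by simp
    also have "\<dots> \<le> \<bar>yj\<bar> + \<bar>S\<bar>" by (rule abs_triangle_ineq4)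
    finally show ?thesis .
  qed
  have B: "\<bar>yj\<bar> + \<bar>S\<bar> \<le> K + G * K" using add_mono[OF yj Sb] .
  have C: "K + G * K = 2^(s-1-j) * K"
  proof -
    have "K + G * K = (1 + G) * K" by (simp add: algebra_simps)
    then show ?thesis unfolding G .
  qed
  have D: "real n * \<bar>xj\<bar> \<le> 2^(s-1-j) * K" using order_trans[OF A B] unfolding C .
  have E: "real n ^ j = real n * real n ^ (j-1)"
  proof -
    obtain i where "j = Suc i" using j by (cases j) auto
    then show ?thesis by simp
  qed
  have F: "2^(s-1-j) * K = real n * (2^(s-1-j) * \<kappa> / real n ^ j)"
    unfolding K E using npos by simp
  have "real n * \<bar>xj\<bar> \<le> real n * (2^(s-1-j) * \<kappa> / real n ^ j)" using D unfolding F .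
  then show ?thesis by (simp only: mult_le_cancel_left_pos[OF npos])
qed

lemma bounds:
  assumes n: "n \<ge> 1" and k: "\<kappa> > 0"
    and yb: "\<forall>i<s-1. \<bar>y i\<bar> \<le> \<kappa> / real n ^ i" and eq: "\<forall>i<s-1. R n s x i = y i"
  shows "1 \<le> j \<Longrightarrow> j < s \<Longrightarrow> \<bar>x j\<bar> \<le> 2^(s-1-j) * \<kappa> / real n ^ j"
proof (induction "s - j" arbitrary: j rule: less_induct)
  case less
  define S where "S = (\<Sum>l\<in>{j<..<s}. real (n choose (l - (j-1))) * x l)"
  have npos: "real n > 0" using n by simp
  have jm: "j - 1 < s - 1" using less.prems by linarith
  have Rj: "R n s x (j-1) = y (j-1)" using eq jm by blast
  have rel: "real n * x j = y (j-1) - S"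
    using Rj R_split[of j s n x] less.prems unfolding S_def by linarith
  have tm: "\<bar>real (n choose (l - (j-1))) * x l\<bar> \<le> 2^(s-1-l) * \<kappa> / real n ^ (j-1)"
    if l: "l \<in> {j<..<s}" for l
  proof -
    have lj: "s - l < s - j" "1 \<le> l" "l < s" using l less.prems by auto
    have IH: "\<bar>x l\<bar> \<le> 2^(s-1-l) * \<kappa> / real n ^ l" by (rule less.hyps[OF lj])
    have jl: "j < l" using l by simp
    show ?thesis using tm_lemma[of n j l x s \<kappa>] npos jl less.prems(1) IH by blast
  qed
  have S1: "\<bar>S\<bar> \<le> (\<Sum>l\<in>{j<..<s}. 2^(s-1-l) * \<kappa> / real n ^ (j-1))"
    unfolding S_def by (rule order_trans[OF sum_abs]) (intro sum_mono tm)
  have S2: "(\<Sum>l\<in>{j<..<s}. 2^(s-1-l) * \<kappa> / real n ^ (j-1)) = (\<Sum>l\<in>{j<..<s}. (2::real)^(s-1-l)) * (\<kappa> / real n ^ (j-1))"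
    by (simp add: sum_distrib_right sum_divide_distrib)
  have Sb: "\<bar>S\<bar> \<le> (\<Sum>l\<in>{j<..<s}. (2::real)^(s-1-l)) * (\<kappa> / real n ^ (j-1))"
    using S1 unfolding S2 .
  have yj: "\<bar>y (j-1)\<bar> \<le> \<kappa> / real n ^ (j-1)" using yb jm by blast
  have G: "1 + (\<Sum>l\<in>{j<..<s}. (2::real)^(s-1-l)) = 2^(s-1-j)" using geo[of j s] less.prems by simp
  show ?case by (rule fin_lemma[OF npos less.prems(1) rel yj Sb G refl])
qed



lemma R_last: "R n s x (s - 1) = 0"
proof -
  have "{s-1<..<s} = {}" by auto
  then show ?thesis unfolding R_def by simp
qed

lemma sol_rows:
  assumes "x \<in> carrier_vec s" "(M_mat s ^\<^sub>m n - 1\<^sub>m s) *\<^sub>v x = y" "i < s"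
  shows "R n s (\<lambda>j. x $ j) i = y $ i"
  using row_eq[OF assms(1,3), of n] assms(2) by simp

theorem mainTheorem13:
  fixes s :: nat
  assumes "s > 1"
  shows "(\<forall>n::nat. n \<ge> 1 \<longrightarrow> (\<forall>y \<in> carrier_vec s. y $ (s - 1) = 0 \<longrightarrow>
            (\<exists>!x. x \<in> carrier_vec s \<and> x $ 0 = 0 \<and> (M_mat s ^\<^sub>m n - 1\<^sub>m s) *\<^sub>v x = y)))
       \<and> (\<forall>n::nat. \<forall>k::nat. \<forall>y x. n \<ge> 1 \<and> 3 \<le> k \<and> k \<le> s
            \<and> y \<in> carrier_vec s \<and> y $ (s - 1) = 0
            \<and> x \<in> carrier_vec s \<and> x $ 0 = 0 \<and> (M_mat s ^\<^sub>m n - 1\<^sub>m s) *\<^sub>v x = y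
            \<and> (\<forall>i. s - k + 2 \<le> i + 1 \<and> i < s \<longrightarrow> y $ i = 0)
            \<longrightarrow> (\<forall>j. s - k + 3 \<le> j + 1 \<and> j < s \<longrightarrow> x $ j = 0))
       \<and> (\<exists>C::real. C > 0 \<and> (\<forall>n::nat. \<forall>\<kappa>::real. \<forall>y x. n \<ge> 1 \<and> \<kappa> > 0
            \<and> y \<in> carrier_vec s \<and> y $ (s - 1) = 0
            \<and> (\<forall>i. i < s - 1 \<longrightarrow> \<bar>y $ i\<bar> \<le> \<kappa> / real n ^ i)
            \<and> x \<in> carrier_vec s \<and> x $ 0 = 0 \<and> (M_mat s ^\<^sub>m n - 1\<^sub>m s) *\<^sub>v x = y
            \<longrightarrow> (\<forall>j. 1 \<le> j \<and> j < s \<longrightarrow> \<bar>x $ j\<bar> \<le> C * \<kappa> / real n ^ j)))"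
proof (intro conjI)
  show "\<forall>n::nat. n \<ge> 1 \<longrightarrow> (\<forall>y \<in> carrier_vec s. y $ (s - 1) = 0 \<longrightarrow>
            (\<exists>!x. x \<in> carrier_vec s \<and> x $ 0 = 0 \<and> (M_mat s ^\<^sub>m n - 1\<^sub>m s) *\<^sub>v x = y))"
  proof (intro allI impI ballI)
    fix n :: nat and y :: "real vec"
    assume n: "n \<ge> 1" and y: "y \<in> carrier_vec s" and ys: "y $ (s - 1) = 0"
    obtain f where f0: "\<forall>j<1. f j = 0" and fr: "\<forall>i. 1 - 1 \<le> i \<and> i < s - 1 \<longrightarrow> R n s f i = y $ i"
      using existence[OF n, of 1 s "\<lambda>i. y $ i"] assms by auto
    define x where "x = vec s f"
    have xc: "x \<in> carrier_vec s" unfolding x_def by simp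
    have x0: "x $ 0 = 0" using f0 assms unfolding x_def by simp
    have xe: "(M_mat s ^\<^sub>m n - 1\<^sub>m s) *\<^sub>v x = y"
    proof (rule eq_vecI)
      show "dim_vec ((M_mat s ^\<^sub>m n - 1\<^sub>m s) *\<^sub>v x) = dim_vec y" using y by simp
      fix i assume "i < dim_vec y"
      then have i: "i < s" using y by simp
      have "((M_mat s ^\<^sub>m n - 1\<^sub>m s) *\<^sub>v x) $ i = R n s (\<lambda>j. x $ j) i" by (rule row_eq[OF xc i])
      also have "\<dots> = R n s f i" by (intro R_cong) (auto simp: x_def)
      also have "\<dots> = y $ i"
      proof (cases "i = s - 1")
        case True then show ?thesis using ys R_last by simp
      next
        case False then show ?thesis using fr i by auto
      qed
      finally show "((M_mat s ^\<^sub>m n - 1\<^sub>m s) *\<^sub>v x) $ i = y $ i" .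
    qed
    show "\<exists>!x. x \<in> carrier_vec s \<and> x $ 0 = 0 \<and> (M_mat s ^\<^sub>m n - 1\<^sub>m s) *\<^sub>v x = y"
    proof (rule ex1I[of _ x])
      show "x \<in> carrier_vec s \<and> x $ 0 = 0 \<and> (M_mat s ^\<^sub>m n - 1\<^sub>m s) *\<^sub>v x = y" using xc x0 xe by simp
      fix x' assume h: "x' \<in> carrier_vec s \<and> x' $ 0 = 0 \<and> (M_mat s ^\<^sub>m n - 1\<^sub>m s) *\<^sub>v x' = y"
      have z: "R n s (\<lambda>j. x' $ j - x $ j) i = 0" if "0 \<le> i" "i < s" for i
        using R_diff[of n s "\<lambda>j. x' $ j" "\<lambda>j. x $ j" i] sol_rows[of x' s n y i] sol_rows[of x s n y i] h xc xe that
        by simp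
      show "x' = x"
      proof (rule eq_vecI)
        show "dim_vec x' = dim_vec x" using h xc by simp
        fix j assume "j < dim_vec x"
        then have j: "j < s" using xc by simp
        show "x' $ j = x $ j"
        proof (cases "j = 0")
          case True then show ?thesis using h x0 by simp
        next
          case False
          then have "x' $ j - x $ j = 0" using zero_tail[OF n, of 0 s "\<lambda>j. x' $ j - x $ j" j] z j by auto
          then show ?thesis by simp
        qed
      qed
    qed
  qed
next
  show "\<forall>n::nat. \<forall>k::nat. \<forall>y x. n \<ge> 1 \<and> 3 \<le> k \<and> k \<le> s
            \<and> y \<in> carrier_vec s \<and> y $ (s - 1) = 0
            \<and> x \<in> carrier_vec s \<and> x $ 0 = 0 \<and> (M_mat s ^\<^sub>m n - 1\<^sub>m s) *\<^sub>v x = y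
            \<and> (\<forall>i. s - k + 2 \<le> i + 1 \<and> i < s \<longrightarrow> y $ i = 0)
            \<longrightarrow> (\<forall>j. s - k + 3 \<le> j + 1 \<and> j < s \<longrightarrow> x $ j = 0)"
  proof (intro allI impI)
    fix n k :: nat and y x :: "real vec" and j :: nat
    assume h: "n \<ge> 1 \<and> 3 \<le> k \<and> k \<le> s
            \<and> y \<in> carrier_vec s \<and> y $ (s - 1) = 0
            \<and> x \<in> carrier_vec s \<and> x $ 0 = 0 \<and> (M_mat s ^\<^sub>m n - 1\<^sub>m s) *\<^sub>v x = y
            \<and> (\<forall>i. s - k + 2 \<le> i + 1 \<and> i < s \<longrightarrow> y $ i = 0)"
      and j: "s - k + 3 \<le> j + 1 \<and> j < s"
    have z: "R n s (\<lambda>j. x $ j) i = 0" if "s - k + 1 \<le> i" "i < s" for i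
      using sol_rows[of x s n y i] h that by auto
    show "x $ j = 0"
      using zero_tail[of n "s - k + 1" s "\<lambda>j. x $ j" j] z h j by auto
  qed
next
  show "\<exists>C::real. C > 0 \<and> (\<forall>n::nat. \<forall>\<kappa>::real. \<forall>y x. n \<ge> 1 \<and> \<kappa> > 0
            \<and> y \<in> carrier_vec s \<and> y $ (s - 1) = 0
            \<and> (\<forall>i. i < s - 1 \<longrightarrow> \<bar>y $ i\<bar> \<le> \<kappa> / real n ^ i)
            \<and> x \<in> carrier_vec s \<and> x $ 0 = 0 \<and> (M_mat s ^\<^sub>m n - 1\<^sub>m s) *\<^sub>v x = y
            \<longrightarrow> (\<forall>j. 1 \<le> j \<and> j < s \<longrightarrow> \<bar>x $ j\<bar> \<le> C * \<kappa> / real n ^ j))"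
  proof (intro exI[of _ "2 ^ s"] conjI allI impI)
    show "(0::real) < 2 ^ s" by simp
    fix n :: nat and \<kappa> :: real and y x :: "real vec" and j :: nat
    assume h: "n \<ge> 1 \<and> \<kappa> > 0
            \<and> y \<in> carrier_vec s \<and> y $ (s - 1) = 0
            \<and> (\<forall>i. i < s - 1 \<longrightarrow> \<bar>y $ i\<bar> \<le> \<kappa> / real n ^ i)
            \<and> x \<in> carrier_vec s \<and> x $ 0 = 0 \<and> (M_mat s ^\<^sub>m n - 1\<^sub>m s) *\<^sub>v x = y"
      and j: "1 \<le> j \<and> j < s"
    have eq: "\<forall>i<s-1. R n s (\<lambda>j. x $ j) i = y $ i"
      using sol_rows[of x s n y] h by auto
    have b: "\<bar>x $ j\<bar> \<le> 2^(s-1-j) * \<kappa> / real n ^ j"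
      using bounds[of n \<kappa> s "\<lambda>i. y $ i" "\<lambda>j. x $ j" j] h eq j by auto
    have "(2::real)^(s-1-j) \<le> 2^s" by (rule power_increasing) auto
    then have "2^(s-1-j) * \<kappa> / real n ^ j \<le> 2^s * \<kappa> / real n ^ j"
      using h by (intro divide_right_mono mult_right_mono) auto
    then show "\<bar>x $ j\<bar> \<le> 2 ^ s * \<kappa> / real n ^ j" using b by linarith
  qed
qed

thm_deps mainTheorem13

end
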